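(* Let $u$ be a drift function, $p\in[1,\infty)$, and $\mu$ a finite non-zero $P$-invariant measure on $\mathbf X$. Then $\mathcal E^p_u(\mathbf X)\subset\mathcal L^p(\mathbf X,\mu)$ and the inclusion map is continuous.
   Context: $(X_n)$ Markov chain on a complete separable metric space $\mathbf X$, $\mathbb P_x$ its law from $x$, $Pf(x)=\mathbb E_xf(X_1)$; $\mu$ is $P$-invariant if $\int Pf\,d\mu=\int f\,d\mu$ for non-negative Borel $f$. $\tau$ is a $\theta$-compatible stopping time ($\mathbb P_x(\tau=0)=0$ and $\mathbb P_x$-a.s. $\tau\ge2\Rightarrow\tau\circ\theta=\tau-1$) with $\mathbb E_x\tau<\infty$ for all $x$; $Qf(x)=\mathbb E_x[f(X_\tau)\mathbf 1_{\tau<\infty}]$. A drift function is a Borel $u:\mathbf X\to[1,\infty)$ such that $u-Pu$ is bounded below and $Qu$, $x\mapsto\mathbb E_x\tau/u(x)$ and $P(u-Pu+B_u)/(u-Pu+B_u)$ are bounded on $\mathbf X$, where $B_u=\sup(Pu-u)+1$. For Borel $v\ge1$, $\mathcal F^p_v$ is the space of Borel $f$ with $\sup|f|^p/v<\infty$, norm $\sup|f|/v^{1/p}$; $\mathcal E^p_u:=\mathcal F^p_{u-Pu+B_u}$. *)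

theory Defs
  imports "HOL-Probability.Probability"
begin

text \<open>Path space: streams \<open>\<omega>\<close> with \<open>X n \<omega> = \<omega> !! n\<close>, \<open>X 0 = x\<close> under \<open>Px x\<close>;
  the shift \<open>\<theta>\<close> is \<open>stl\<close>.\<close>

definition markov_law ::
  "('a::polish_space \<Rightarrow> 'a measure) \<Rightarrow> ('a \<Rightarrow> 'a stream measure) \<Rightarrow> bool" where
  "markov_law K Px \<longleftrightarrow>
     K \<in> borel \<rightarrow>\<^sub>M prob_algebra borel \<and>
     Px \<in> borel \<rightarrow>\<^sub>M prob_algebra (stream_space borel) \<and>
     (\<forall>x. Px x = K x \<bind> (\<lambda>y. distr (Px y) (stream_space borel) (\<lambda>\<omega>. x ## \<omega>)))"

definition nat_filtration :: "nat \<Rightarrow> 'a::polish_space stream measure" where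
  "nat_filtration n = vimage_algebra (space (stream_space (borel :: 'a measure)))
      (\<lambda>\<omega>. restrict (\<lambda>i. \<omega> !! i) {..n}) (PiM {..n} (\<lambda>_. borel))"

definition nat_stopping_time :: "('a::polish_space stream \<Rightarrow> enat) \<Rightarrow> bool" where
  "nat_stopping_time \<tau> \<longleftrightarrow> (\<forall>n::nat. Measurable.pred (nat_filtration n) (\<lambda>\<omega>. \<tau> \<omega> \<le> enat n))"

definition theta_compatible ::
  "('a::polish_space \<Rightarrow> 'a stream measure) \<Rightarrow> ('a stream \<Rightarrow> enat) \<Rightarrow> bool" where
  "theta_compatible Px \<tau> \<longleftrightarrow>
     (\<forall>x. emeasure (Px x) {\<omega> \<in> space (Px x). \<tau> \<omega> = 0} = 0 \<and>
          (AE \<omega> in Px x. \<tau> \<omega> \<ge> 2 \<longrightarrow> \<tau> (stl \<omega>) = \<tau> \<omega> - 1))"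

definition Etau :: "('a \<Rightarrow> 'a stream measure) \<Rightarrow> ('a stream \<Rightarrow> enat) \<Rightarrow> 'a \<Rightarrow> ennreal" where
  "Etau Px \<tau> x = (\<integral>\<^sup>+ \<omega>. (case \<tau> \<omega> of enat n \<Rightarrow> of_nat n | \<infinity> \<Rightarrow> \<infinity>) \<partial>Px x)"

definition Qop :: "('a \<Rightarrow> 'a stream measure) \<Rightarrow> ('a stream \<Rightarrow> enat) \<Rightarrow> ('a \<Rightarrow> real) \<Rightarrow> 'a \<Rightarrow> ennreal" where
  "Qop Px \<tau> f x = (\<integral>\<^sup>+ \<omega>. (case \<tau> \<omega> of enat n \<Rightarrow> ennreal (f (\<omega> !! n)) | \<infinity> \<Rightarrow> 0) \<partial>Px x)"

definition Pop :: "('a \<Rightarrow> 'a measure) \<Rightarrow> ('a \<Rightarrow> real) \<Rightarrow> 'a \<Rightarrow> ennreal" where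
  "Pop K f x = (\<integral>\<^sup>+ y. ennreal (f y) \<partial>K x)"

definition Pu_real :: "('a \<Rightarrow> 'a measure) \<Rightarrow> ('a \<Rightarrow> real) \<Rightarrow> 'a \<Rightarrow> real" where
  "Pu_real K u x = enn2real (Pop K u x)"

definition B_u :: "('a \<Rightarrow> 'a measure) \<Rightarrow> ('a \<Rightarrow> real) \<Rightarrow> real" where
  "B_u K u = (SUP x. Pu_real K u x - u x) + 1"

definition wfun :: "('a \<Rightarrow> 'a measure) \<Rightarrow> ('a \<Rightarrow> real) \<Rightarrow> 'a \<Rightarrow> real" where
  "wfun K u x = u x - Pu_real K u x + B_u K u"

definition drift_function ::
  "('a::polish_space \<Rightarrow> 'a measure) \<Rightarrow> ('a \<Rightarrow> 'a stream measure) \<Rightarrow> ('a stream \<Rightarrow> enat)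
   \<Rightarrow> ('a \<Rightarrow> real) \<Rightarrow> bool" where
  "drift_function K Px \<tau> u \<longleftrightarrow>
     u \<in> borel_measurable borel \<and> (\<forall>x. 1 \<le> u x) \<and>
     \<comment> \<open>\<open>u - P u\<close> bounded below (in particular \<open>P u\<close> finite)\<close>
     (\<exists>c. \<forall>x. Pop K u x \<le> ennreal (u x + c)) \<and>
     (\<exists>C. \<forall>x. Qop Px \<tau> u x \<le> ennreal C) \<and>
     (\<exists>C. \<forall>x. Etau Px \<tau> x / ennreal (u x) \<le> ennreal C) \<and>
     (\<exists>C. \<forall>x. Pop K (wfun K u) x / ennreal (wfun K u x) \<le> ennreal C)"

definition Fp :: "real \<Rightarrow> ('a::polish_space \<Rightarrow> real) \<Rightarrow> ('a \<Rightarrow> real) set" where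
  "Fp p v = {f. f \<in> borel_measurable borel \<and> (\<exists>C. \<forall>x. \<bar>f x\<bar> powr p / v x \<le> C)}"

definition Fp_norm :: "real \<Rightarrow> ('a \<Rightarrow> real) \<Rightarrow> ('a \<Rightarrow> real) \<Rightarrow> real" where
  "Fp_norm p v f = (SUP x. \<bar>f x\<bar> / v x powr (1 / p))"

definition Ep :: "('a::polish_space \<Rightarrow> 'a measure) \<Rightarrow> real \<Rightarrow> ('a \<Rightarrow> real) \<Rightarrow> ('a \<Rightarrow> real) set" where
  "Ep K p u = Fp p (wfun K u)"

definition Ep_norm :: "('a \<Rightarrow> 'a measure) \<Rightarrow> real \<Rightarrow> ('a \<Rightarrow> real) \<Rightarrow> ('a \<Rightarrow> real) \<Rightarrow> real" where
  "Ep_norm K p u f = Fp_norm p (wfun K u) f"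

definition Lp_space :: "'a measure \<Rightarrow> real \<Rightarrow> ('a \<Rightarrow> real) set" where
  "Lp_space M p = {f. f \<in> borel_measurable M \<and> integrable M (\<lambda>x. \<bar>f x\<bar> powr p)}"

definition Lp_norm :: "'a measure \<Rightarrow> real \<Rightarrow> ('a \<Rightarrow> real) \<Rightarrow> real" where
  "Lp_norm M p f = (\<integral>x. \<bar>f x\<bar> powr p \<partial>M) powr (1 / p)"

definition P_invariant :: "('a::polish_space \<Rightarrow> 'a measure) \<Rightarrow> 'a measure \<Rightarrow> bool" where
  "P_invariant K \<mu> \<longleftrightarrow>
     (\<forall>f \<in> borel_measurable (borel :: 'a measure).
        (\<integral>\<^sup>+ x. (\<integral>\<^sup>+ y. f y \<partial>K x) \<partial>\<mu>) = (\<integral>\<^sup>+ x. f x \<partial>\<mu>))"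

end

theory Submission
  imports Defs
begin

lemma key:
  fixes K :: "'a::polish_space \<Rightarrow> 'a measure" and u :: "'a \<Rightarrow> real" and c :: real
  assumes K: "K \<in> borel \<rightarrow>\<^sub>M prob_algebra borel"
    and u[measurable]: "u \<in> borel_measurable borel" and u1: "\<And>x. 1 \<le> u x"
    and c0: "0 \<le> c" and c: "\<And>x. Pop K u x \<le> ennreal (u x + c)"
    and sm: "sets \<mu> = sets borel" and fm: "finite_measure \<mu>"
    and inv: "P_invariant K \<mu>"
  shows "(\<integral>\<^sup>+x. ennreal (u x - Pu_real K u x + c) \<partial>\<mu>) \<le> ennreal c * emeasure \<mu> (space \<mu>)"
proof -
  have Ks[measurable]: "K \<in> borel \<rightarrow>\<^sub>M subprob_algebra borel" using measurable_prob_algebraD[OF K] .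
  have Kx: "sets (K x) = sets borel" "prob_space (K x)" for x
    using measurable_space[OF K, of x] by (auto simp: space_prob_algebra)
  have mcong: "borel_measurable \<mu> = borel_measurable borel" by (rule measurable_cong_sets[OF sm refl])
  define v where "v = Pu_real K u"
  have Pv: "Pop K u x = ennreal (v x)" for x
    using c[of x] unfolding v_def Pu_real_def by (cases "Pop K u x") (auto simp: top_unique)
  have v0: "0 \<le> v x" for x unfolding v_def Pu_real_def by simp
  have vle: "v x \<le> u x + c" for x using c[of x] Pv[of x] u1[of x] c0 by (simp add: ennreal_le_iff del: ennreal_plus)
  have vm[measurable]: "v \<in> borel_measurable borel"
    unfolding v_def Pu_real_def Pop_def by measurable
  define fN where "fN N y = ennreal (min (u y) (real N))" for N :: nat and y
  have fNm[measurable]: "fN N \<in> borel_measurable borel" for N unfolding fN_def by measurable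
  have PfNm: "(\<lambda>x. \<integral>\<^sup>+ y. fN N y \<partial>K x) \<in> borel_measurable borel" for N by measurable
  have pw: "ennreal (u x - v x + c) * indicator {x. u x \<le> real N} x + (\<integral>\<^sup>+ y. fN N y \<partial>K x)
      \<le> fN N x + ennreal c" for N x
  proof (cases "u x \<le> real N")
    case True
    have "(\<integral>\<^sup>+ y. fN N y \<partial>K x) \<le> (\<integral>\<^sup>+ y. ennreal (u y) \<partial>K x)"
      by (rule nn_integral_mono) (auto simp: fN_def intro!: ennreal_leI)
    also have "\<dots> = ennreal (v x)" using Pv[of x] by (simp add: Pop_def)
    finally have "ennreal (u x - v x + c) * indicator {x. u x \<le> real N} x + (\<integral>\<^sup>+ y. fN N y \<partial>K x)
      \<le> ennreal (u x - v x + c) + ennreal (v x)" using True by (simp add: add_left_mono)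
    also have "\<dots> = ennreal (u x + c)" using vle[of x] v0[of x] by (subst ennreal_plus[symmetric]) auto
    also have "\<dots> = fN N x + ennreal c" using True u1[of x] c0 by (simp add: fN_def)
    finally show ?thesis .
  next
    case False
    have "(\<integral>\<^sup>+ y. fN N y \<partial>K x) \<le> (\<integral>\<^sup>+ y. ennreal (real N) \<partial>K x)"
      by (rule nn_integral_mono) (auto simp: fN_def)
    also have "\<dots> = ennreal (real N)" using prob_space.emeasure_space_1[OF Kx(2)[of x]] by simp
    also have "\<dots> \<le> fN N x + ennreal c" using False by (simp add: fN_def)
    finally show ?thesis using False by simp
  qed
  have bnd: "(\<integral>\<^sup>+x. ennreal (u x - v x + c) * indicator {x. u x \<le> real N} x \<partial>\<mu>) \<le> ennreal c * emeasure \<mu> (space \<mu>)" for N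
  proof -
    have fin: "(\<integral>\<^sup>+x. fN N x \<partial>\<mu>) \<noteq> \<infinity>"
    proof -
      have "(\<integral>\<^sup>+x. fN N x \<partial>\<mu>) \<le> (\<integral>\<^sup>+x. ennreal (real N) \<partial>\<mu>)"
        by (rule nn_integral_mono) (auto simp: fN_def)
      also have "\<dots> < \<infinity>" using finite_measure.emeasure_real[OF fm, of "space \<mu>"]
        by (auto simp: ennreal_mult_less_top)
      finally show ?thesis by simp
    qed
    have "(\<integral>\<^sup>+x. fN N x \<partial>\<mu>) + (\<integral>\<^sup>+x. ennreal (u x - v x + c) * indicator {x. u x \<le> real N} x \<partial>\<mu>)
        = (\<integral>\<^sup>+x. ennreal (u x - v x + c) * indicator {x. u x \<le> real N} x + (\<integral>\<^sup>+ y. fN N y \<partial>K x) \<partial>\<mu>)"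
      using inv[unfolded P_invariant_def, rule_format, OF fNm[of N]]
      by (subst nn_integral_add) (auto simp: mcong add.commute)
    also have "\<dots> \<le> (\<integral>\<^sup>+x. fN N x + ennreal c \<partial>\<mu>)" by (rule nn_integral_mono) (rule pw)
    also have "\<dots> = (\<integral>\<^sup>+x. fN N x \<partial>\<mu>) + ennreal c * emeasure \<mu> (space \<mu>)"
      by (subst nn_integral_add) (auto simp: mcong)
    finally show ?thesis using fin by (simp add: ennreal_add_left_cancel_le)
  qed
  have "(\<integral>\<^sup>+x. ennreal (u x - v x + c) \<partial>\<mu>) = (\<integral>\<^sup>+x. (SUP N. ennreal (u x - v x + c) * indicator {x. u x \<le> real N} x) \<partial>\<mu>)"
  proof (rule nn_integral_cong)
    fix x
    obtain N :: nat where N: "u x \<le> real N" using real_arch_simple by blast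
    show "ennreal (u x - v x + c) = (SUP N. ennreal (u x - v x + c) * indicator {x. u x \<le> real N} x)"
    proof (rule antisym)
      show "ennreal (u x - v x + c) \<le> (SUP N. ennreal (u x - v x + c) * indicator {x. u x \<le> real N} x)"
        by (rule SUP_upper2[of N]) (use N in auto)
      show "(SUP N. ennreal (u x - v x + c) * indicator {x. u x \<le> real N} x) \<le> ennreal (u x - v x + c)"
        by (rule SUP_least) (auto simp: indicator_def)
    qed
  qed
  also have "\<dots> = (SUP N. (\<integral>\<^sup>+x. ennreal (u x - v x + c) * indicator {x. u x \<le> real N} x \<partial>\<mu>))"
  proof (rule nn_integral_monotone_convergence_SUP)
    show "incseq (\<lambda>N x. ennreal (u x - v x + c) * indicator {x. u x \<le> real N} x)"
      by (auto simp: incseq_def le_fun_def indicator_def intro!: mult_left_mono)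
    show "(\<lambda>x. ennreal (u x - v x + c) * indicator {x. u x \<le> real N} x) \<in> borel_measurable \<mu>" for N
      unfolding mcong by measurable
  qed
  also have "\<dots> \<le> ennreal c * emeasure \<mu> (space \<mu>)" by (rule SUP_least) (rule bnd)
  finally show ?thesis unfolding v_def .
qed

theorem mainTheorem14:
  fixes K :: "'a::polish_space \<Rightarrow> 'a measure"
    and Px :: "'a \<Rightarrow> 'a stream measure"
    and \<tau> :: "'a stream \<Rightarrow> enat"
    and u :: "'a \<Rightarrow> real"
    and p :: real
    and \<mu> :: "'a measure"
  assumes "markov_law K Px"
    and "nat_stopping_time \<tau>"
    and "theta_compatible Px \<tau>"
    and "\<forall>x. Etau Px \<tau> x < \<infinity>"
    and "drift_function K Px \<tau> u"
    and "1 \<le> p"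
    and "sets \<mu> = sets borel"
    and "finite_measure \<mu>"
    and "emeasure \<mu> (space \<mu>) \<noteq> 0"
    and "P_invariant K \<mu>"
  shows "Ep K p u \<subseteq> Lp_space \<mu> p \<and>
    (\<forall>fs f. (\<forall>n. fs n \<in> Ep K p u) \<longrightarrow> f \<in> Ep K p u \<longrightarrow>
        (\<lambda>n. Ep_norm K p u (\<lambda>x. fs n x - f x)) \<longlonglongrightarrow> 0 \<longrightarrow>
        (\<lambda>n. Lp_norm \<mu> p (\<lambda>x. fs n x - f x)) \<longlonglongrightarrow> 0)"
  proof -
  have mk: "markov_law K Px" and dr: "drift_function K Px \<tau> u" and p1: "1 \<le> p"
    and sm: "sets \<mu> = sets borel" and fm: "finite_measure \<mu>" and inv: "P_invariant K \<mu>"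
    using assms by auto
  have K: "K \<in> borel \<rightarrow>\<^sub>M prob_algebra borel" using mk by (simp add: markov_law_def)
  have u[measurable]: "u \<in> borel_measurable borel" and u1: "\<And>x. 1 \<le> u x" using dr by (auto simp: drift_function_def)
  obtain c0 where c0: "\<And>x. Pop K u x \<le> ennreal (u x + c0)" using dr by (auto simp: drift_function_def)
  define c where "c = max c0 0"
  have cpos: "0 \<le> c" by (simp add: c_def)
  have c: "Pop K u x \<le> ennreal (u x + c)" for x
    using c0[of x] by (rule order_trans) (auto simp: c_def intro!: ennreal_leI)
  have mcong: "borel_measurable \<mu> = borel_measurable borel" by (rule measurable_cong_sets[OF sm refl])
  have Ks[measurable]: "K \<in> borel \<rightarrow>\<^sub>M subprob_algebra borel" using measurable_prob_algebraD[OF K] .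
  define v where "v = Pu_real K u"
  have Pv: "Pop K u x = ennreal (v x)" for x
    using c[of x] unfolding v_def Pu_real_def by (cases "Pop K u x") (auto simp: top_unique)
  have v0: "0 \<le> v x" for x unfolding v_def Pu_real_def by simp
  have vle: "v x - u x \<le> c" for x using c[of x] Pv[of x] u1[of x] cpos by (simp add: ennreal_le_iff del: ennreal_plus)
  have vm[measurable]: "v \<in> borel_measurable borel"
    unfolding v_def Pu_real_def Pop_def by measurable
  define w where "w = wfun K u"
  have bdd: "bdd_above (range (\<lambda>x. v x - u x))" using vle by (intro bdd_aboveI2) auto
  have wB: "w x = u x - v x + ((SUP x. v x - u x) + 1)" for x
    unfolding w_def wfun_def B_u_def v_def by simp
  have w1: "1 \<le> w x" for x using cSUP_upper[OF UNIV_I bdd, of x] wB[of x] by simp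
  have wle: "w x \<le> u x - v x + c + 1" for x
    using cSUP_least[of UNIV "\<lambda>x. v x - u x" c] vle wB[of x] by simp
  have wm[measurable]: "w \<in> borel_measurable borel" using wB
  proof -
    have "w = (\<lambda>x. u x - v x + ((SUP x. v x - u x) + 1))" using wB by auto
    then show ?thesis by simp
  qed
  have kk: "(\<integral>\<^sup>+x. ennreal (u x - v x + c) \<partial>\<mu>) \<le> ennreal c * emeasure \<mu> (space \<mu>)"
    using key[OF K u u1 cpos c sm fm inv] unfolding v_def .
  have fin: "emeasure \<mu> (space \<mu>) < \<infinity>" using finite_measure.emeasure_finite[OF fm, of "space \<mu>"]
    by (simp add: top.not_eq_extremum)
  have wint: "integrable \<mu> w"
  proof (rule integrableI_bounded)
    show "w \<in> borel_measurable \<mu>" unfolding mcong by simp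
    have "(\<integral>\<^sup>+x. ennreal (norm (w x)) \<partial>\<mu>) \<le> (\<integral>\<^sup>+x. ennreal (u x - v x + c) + ennreal 1 \<partial>\<mu>)"
      proof (intro nn_integral_mono)
      fix x
      have "ennreal (norm (w x)) \<le> ennreal (u x - v x + c + 1)"
        using w1[of x] wle[of x] by (intro ennreal_leI) simp
      also have "\<dots> = ennreal (u x - v x + c) + ennreal 1"
        using vle[of x] by (subst ennreal_plus) auto
      finally show "ennreal (norm (w x)) \<le> ennreal (u x - v x + c) + ennreal 1" .
    qed
    also have "\<dots> = (\<integral>\<^sup>+x. ennreal (u x - v x + c) \<partial>\<mu>) + emeasure \<mu> (space \<mu>)"
      by (subst nn_integral_add) (auto simp: mcong)
    also have "\<dots> < \<infinity>"
    proof -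
      have "ennreal c * emeasure \<mu> (space \<mu>) < \<infinity>" using fin by (simp add: ennreal_mult_less_top)
      then have "(\<integral>\<^sup>+x. ennreal (u x - v x + c) \<partial>\<mu>) < \<infinity>" by (rule le_less_trans[OF kk])
      then show ?thesis using fin by (simp add: ennreal_add_less_top)
    qed
    finally show "(\<integral>\<^sup>+x. ennreal (norm (w x)) \<partial>\<mu>) < \<infinity>" .
  qed
  have p0: "0 < p" using p1 by simp
  have dom: "integrable \<mu> (\<lambda>x. \<bar>g x\<bar> powr p)"
    if gm: "g \<in> borel_measurable borel" and gb: "\<And>x. \<bar>g x\<bar> powr p \<le> C * w x" for g C
  proof (rule Bochner_Integration.integrable_bound[OF integrable_mult_right[OF wint, of C]])
    show "(\<lambda>x. \<bar>g x\<bar> powr p) \<in> borel_measurable \<mu>" unfolding mcong using gm by measurable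
    show "AE x in \<mu>. norm (\<bar>g x\<bar> powr p) \<le> norm (C * w x)"
      using gb by (auto intro: order_trans[OF _ abs_ge_self])
  qed
  have Ebound: "\<exists>C\<ge>0. \<forall>x. \<bar>f x\<bar> powr p \<le> C * w x" if fE: "f \<in> Ep K p u" for f
  proof -
    obtain C where C: "\<And>x. \<bar>f x\<bar> powr p / w x \<le> C"
      using fE unfolding Ep_def Fp_def w_def by auto
    have "0 \<le> C" using order_trans[OF _ C[of undefined]] w1[of undefined] by simp
    moreover have "\<bar>f x\<bar> powr p \<le> C * w x" for x
      using C[of x] w1[of x] by (simp add: divide_le_eq)
    ultimately show ?thesis by blast
  qed
  have Emeas: "f \<in> borel_measurable borel" if "f \<in> Ep K p u" for f
    using that unfolding Ep_def Fp_def by auto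
  have part1: "Ep K p u \<subseteq> Lp_space \<mu> p"
  proof
    fix f assume f: "f \<in> Ep K p u"
    obtain C where "\<And>x. \<bar>f x\<bar> powr p \<le> C * w x" using Ebound[OF f] by auto
    then show "f \<in> Lp_space \<mu> p" unfolding Lp_space_def
      using dom[OF Emeas[OF f]] Emeas[OF f] by (auto simp: mcong)
  qed
  have Eroot: "\<exists>D\<ge>0. \<forall>x. \<bar>f x\<bar> \<le> D * w x powr (1/p)" if fE: "f \<in> Ep K p u" for f
  proof -
    obtain C where C0: "0 \<le> C" and C: "\<And>x. \<bar>f x\<bar> powr p \<le> C * w x" using Ebound[OF fE] by auto
    have "\<bar>f x\<bar> \<le> C powr (1/p) * w x powr (1/p)" for x
    proof -
      have "\<bar>f x\<bar> = (\<bar>f x\<bar> powr p) powr (1/p)" using p0 by (simp add: powr_powr)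
      also have "\<dots> \<le> (C * w x) powr (1/p)" using C[of x] p0 by (intro powr_mono2) auto
      also have "\<dots> = C powr (1/p) * w x powr (1/p)" using C0 w1[of x] by (simp add: powr_mult)
      finally show ?thesis .
    qed
    then show ?thesis by (intro exI[of _ "C powr (1/p)"]) auto
  qed
  have part2: "(\<lambda>n. Lp_norm \<mu> p (\<lambda>x. fs n x - f x)) \<longlonglongrightarrow> 0"
    if fs: "\<forall>n. fs n \<in> Ep K p u" and f: "f \<in> Ep K p u"
    and lim: "(\<lambda>n. Ep_norm K p u (\<lambda>x. fs n x - f x)) \<longlonglongrightarrow> 0" for fs f
  proof -
    define e where "e n = Ep_norm K p u (\<lambda>x. fs n x - f x)" for n
    define I where "I = (\<integral>x. w x \<partial>\<mu>)"
    have bound: "Lp_norm \<mu> p (\<lambda>x. fs n x - f x) \<le> e n * I powr (1/p)" for n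
    proof -
      obtain D1 where D1: "0 \<le> D1" "\<And>x. \<bar>fs n x\<bar> \<le> D1 * w x powr (1/p)" using Eroot[of "fs n"] fs by auto
      obtain D2 where D2: "0 \<le> D2" "\<And>x. \<bar>f x\<bar> \<le> D2 * w x powr (1/p)" using Eroot[OF f] by auto
      have wp: "0 < w x powr (1/p)" for x using w1[of x] by simp
      have bdd: "bdd_above (range (\<lambda>x. \<bar>fs n x - f x\<bar> / w x powr (1/p)))"
      proof (rule bdd_aboveI)
        fix y assume "y \<in> range (\<lambda>x. \<bar>fs n x - f x\<bar> / w x powr (1/p))"
        then obtain x where y: "y = \<bar>fs n x - f x\<bar> / w x powr (1/p)" by auto
        have "\<bar>fs n x - f x\<bar> \<le> (D1 + D2) * w x powr (1/p)"
          using D1(2)[of x] D2(2)[of x] unfolding distrib_right by (simp add: abs_le_iff)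
        then show "y \<le> D1 + D2" using wp[of x] by (simp add: y divide_le_eq)
      qed
      have ex: "\<bar>fs n x - f x\<bar> / w x powr (1/p) \<le> e n" for x
        unfolding e_def Ep_norm_def Fp_norm_def w_def[symmetric] by (rule cSUP_upper[OF UNIV_I bdd])
      have e0: "0 \<le> e n" using order_trans[OF _ ex[of undefined]] by simp
      have pt: "\<bar>fs n x - f x\<bar> powr p \<le> e n powr p * w x" for x
      proof -
        have "\<bar>fs n x - f x\<bar> \<le> e n * w x powr (1/p)" using ex[of x] wp[of x] by (simp add: divide_le_eq)
        then have "\<bar>fs n x - f x\<bar> powr p \<le> (e n * w x powr (1/p)) powr p" using p0 by (intro powr_mono2) auto
        also have "\<dots> = e n powr p * w x" using e0 w1[of x] p0 by (simp add: powr_mult powr_powr)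
        finally show ?thesis .
      qed
      have gm: "(\<lambda>x. fs n x - f x) \<in> borel_measurable borel" using Emeas[OF f] Emeas[of "fs n"] fs by (intro borel_measurable_diff) auto
      have "(\<integral>x. \<bar>fs n x - f x\<bar> powr p \<partial>\<mu>) \<le> (\<integral>x. e n powr p * w x \<partial>\<mu>)"
        by (rule integral_mono[OF dom[OF gm pt] integrable_mult_right[OF wint] pt])
      also have "\<dots> = e n powr p * I" by (simp add: I_def)
      finally have "Lp_norm \<mu> p (\<lambda>x. fs n x - f x) \<le> (e n powr p * I) powr (1/p)"
        unfolding Lp_norm_def using p0 by (intro powr_mono2) auto
      also have "\<dots> = e n * I powr (1/p)"
        using e0 p0 integral_nonneg_AE[of "\<lambda>x. w x" \<mu>] w1 by (simp add: I_def powr_mult powr_powr order_trans[OF zero_le_one])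
      finally show ?thesis .
    qed
    have "(\<lambda>n. e n * I powr (1/p)) \<longlonglongrightarrow> 0 * I powr (1/p)"
      using lim unfolding e_def by (intro tendsto_mult tendsto_const)
    then have "(\<lambda>n. e n * I powr (1/p)) \<longlonglongrightarrow> 0" by simp
    then show ?thesis
    proof (rule tendsto_sandwich[rotated 2, OF tendsto_const])
      show "\<forall>\<^sub>F n in sequentially. 0 \<le> Lp_norm \<mu> p (\<lambda>x. fs n x - f x)" by (simp add: Lp_norm_def)
      show "\<forall>\<^sub>F n in sequentially. Lp_norm \<mu> p (\<lambda>x. fs n x - f x) \<le> e n * I powr (1/p)"
        using bound by simp
    qed
  qed
  show ?thesis using part1 part2 by blast
qed

end
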